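(* Let $T\in\mathcal{L}(\mathcal{H})$ have closed range and let $n\ge1$ be such that $T^n$ has closed range. (1) If $T^n$ is EP, then $T$ is $n$-EP. (2) If $T$ is SD, then $T$ is $n$-EP if and only if $T^n$ is EP.
   Context: $\mathcal{H}$ is a Hilbert space, $\mathcal{L}(\mathcal{H})$ the bounded operators on it. For $A$ with closed range, $A^\dagger$ is its Moore–Penrose inverse (unique solution of $AA^\dagger A=A$, $A^\dagger AA^\dagger=A^\dagger$, $(A^\dagger A)^*=A^\dagger A$, $(AA^\dagger)^*=AA^\dagger$). $A$ is EP if it has closed range and $R(A)=R(A^* )$ (equivalently $AA^\dagger=A^\dagger A$). $T$ is SD if it has closed range and $T^*T^\dagger=T^\dagger T^*$. For $n\ge1$, $T$ is $n$-EP if $T$ has closed range and $T^nT^\dagger=T^\dagger T^n$. *)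

theory Defs
  imports "HOL-Analysis.Analysis"
begin

(* Bounded operators on a (real) Hilbert space are modelled as blinfuns. *)

definition closed_range :: "('a::real_normed_vector \<Rightarrow>\<^sub>L 'a) \<Rightarrow> bool" where
  "closed_range A \<longleftrightarrow> closed (range (blinfun_apply A))"

definition opow :: "('a::real_normed_vector \<Rightarrow>\<^sub>L 'a) \<Rightarrow> nat \<Rightarrow> ('a \<Rightarrow>\<^sub>L 'a)" where
  "opow A n = ((\<lambda>B. A o\<^sub>L B) ^^ n) id_blinfun"

definition is_adjoint :: "('a::real_inner \<Rightarrow>\<^sub>L 'a) \<Rightarrow> ('a \<Rightarrow>\<^sub>L 'a) \<Rightarrow> bool" where
  "is_adjoint A S \<longleftrightarrow> (\<forall>x y. inner (A x) y = inner x (S y))"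

definition adj :: "('a::real_inner \<Rightarrow>\<^sub>L 'a) \<Rightarrow> ('a \<Rightarrow>\<^sub>L 'a)" where
  "adj A = (THE S. is_adjoint A S)"

definition is_mp_inverse :: "('a::real_inner \<Rightarrow>\<^sub>L 'a) \<Rightarrow> ('a \<Rightarrow>\<^sub>L 'a) \<Rightarrow> bool" where
  "is_mp_inverse A B \<longleftrightarrow>
     A o\<^sub>L B o\<^sub>L A = A \<and> B o\<^sub>L A o\<^sub>L B = B \<and>
     adj (B o\<^sub>L A) = B o\<^sub>L A \<and> adj (A o\<^sub>L B) = A o\<^sub>L B"

definition mp :: "('a::real_inner \<Rightarrow>\<^sub>L 'a) \<Rightarrow> ('a \<Rightarrow>\<^sub>L 'a)" where
  "mp A = (THE B. is_mp_inverse A B)"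

definition is_EP :: "('a::real_inner \<Rightarrow>\<^sub>L 'a) \<Rightarrow> bool" where
  "is_EP A \<longleftrightarrow> closed_range A \<and> range (blinfun_apply A) = range (blinfun_apply (adj A))"

definition is_SD :: "('a::real_inner \<Rightarrow>\<^sub>L 'a) \<Rightarrow> bool" where
  "is_SD T \<longleftrightarrow> closed_range T \<and> adj T o\<^sub>L mp T = mp T o\<^sub>L adj T"

definition is_nEP :: "nat \<Rightarrow> ('a::real_inner \<Rightarrow>\<^sub>L 'a) \<Rightarrow> bool" where
  "is_nEP n T \<longleftrightarrow> closed_range T \<and> opow T n o\<^sub>L mp T = mp T o\<^sub>L opow T n"

end

theory Submission
  imports Defs
begin

lemma parallelogram:
  fixes a b :: "'a::real_inner"
  shows "(norm (a - b))^2 + (norm (a + b))^2 = 2 * (norm a)^2 + 2 * (norm b)^2"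
  by (simp add: power2_norm_eq_inner inner_diff_left inner_diff_right inner_add_left inner_add_right inner_commute)

lemma norm_sq_expand:
  fixes a b :: "'a::real_inner"
  shows "(norm (a - t *\<^sub>R b))^2 = (norm a)^2 - 2 * t * inner a b + t^2 * (norm b)^2"
  unfolding power2_norm_eq_inner by (simp add: inner_diff_left inner_diff_right inner_commute power2_eq_square algebra_simps)

lemma pythag:
  fixes a b :: "'a::real_inner"
  assumes "inner a b = 0"
  shows "(norm (a + b))^2 = (norm a)^2 + (norm b)^2"
  using assms by (simp add: power2_norm_eq_inner inner_add_left inner_add_right inner_commute)

lemma proj_exists:
  fixes M :: "'a::{real_inner,complete_space} set"
  assumes cl: "closed M" and sub: "subspace M"
  shows "\<exists>m\<in>M. \<forall>y\<in>M. inner (x - m) y = 0"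
proof -
  define S where "S = (\<lambda>m. (norm (x - m))^2) ` M"
  define D where "D = Inf S"
  have ne: "S \<noteq> {}" using sub subspace_0 unfolding S_def by blast
  have bdd: "bdd_below S" unfolding S_def by (rule bdd_belowI[of _ 0]) auto
  have Dle: "D \<le> (norm (x - m))^2" if "m \<in> M" for m
    unfolding D_def using bdd that by (intro cInf_lower) (auto simp: S_def)
  have "\<exists>m. m \<in> M \<and> (norm (x - m))^2 < D + inverse (real (Suc k))" for k
  proof -
    have "Inf S < D + inverse (real (Suc k))" unfolding D_def by simp
    then obtain s where "s \<in> S" "s < D + inverse (real (Suc k))"
      using cInf_less_iff[OF ne bdd] by blast
    then show ?thesis unfolding S_def by blast
  qed
  then obtain ms where ms: "\<And>k. ms k \<in> M" "\<And>k. (norm (x - ms k))^2 < D + inverse (real (Suc k))"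
    by metis
  have key: "(norm (ms j - ms k))^2 < 2 * inverse (real (Suc j)) + 2 * inverse (real (Suc k))" for j k
  proof -
    define mid where "mid = (1/2) *\<^sub>R (ms j + ms k)"
    have "mid \<in> M" unfolding mid_def using ms(1) sub by (simp add: subspace_add subspace_scale)
    then have "D \<le> (norm (x - mid))^2" by (rule Dle)
    have e1: "(x - ms j) + (x - ms k) = 2 *\<^sub>R (x - mid)"
      unfolding mid_def by (simp add: algebra_simps scaleR_2)
    have e2: "(norm ((x - ms j) + (x - ms k)))^2 = 4 * (norm (x - mid))^2"
      unfolding e1 by (simp add: power2_eq_square)
    have e3: "(x - ms j) - (x - ms k) = ms k - ms j" by simp
    have "(norm (ms k - ms j))^2 + 4 * (norm (x - mid))^2 = 2 * (norm (x - ms j))^2 + 2 * (norm (x - ms k))^2"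
      using parallelogram[of "x - ms j" "x - ms k"] unfolding e2 e3 by simp
    then show ?thesis using ms(2)[of j] ms(2)[of k] \<open>D \<le> _\<close> by (simp add: norm_minus_commute)
  qed
  have "Cauchy ms"
  proof (rule metric_CauchyI)
    fix e :: real assume "0 < e"
    obtain N :: nat where N: "4 / e^2 < real N" using reals_Archimedean2 by blast
    have "0 < e^2" using \<open>0<e\<close> by simp
    have "inverse (real (Suc N)) < e^2 / 4"
      using N \<open>0<e^2\<close> by (simp add: field_simps; linarith)
    show "\<exists>M. \<forall>m\<ge>M. \<forall>n\<ge>M. dist (ms m) (ms n) < e"
    proof (intro exI allI impI)
      fix j k assume "N \<le> j" "N \<le> k"
      have "inverse (real (Suc j)) \<le> inverse (real (Suc N))" "inverse (real (Suc k)) \<le> inverse (real (Suc N))"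
        using \<open>N \<le> j\<close> \<open>N \<le> k\<close> by (auto simp: field_simps)
      then have "(norm (ms j - ms k))^2 < e^2"
        using key[of j k] \<open>inverse (real (Suc N)) < e^2 / 4\<close> by linarith
      then show "dist (ms j) (ms k) < e"
        using \<open>0 < e\<close> by (simp add: dist_norm power_less_imp_less_base)
    qed
  qed
  then obtain m where lim: "ms \<longlonglongrightarrow> m" using Cauchy_convergent_iff convergent_def by blast
  have mM: "m \<in> M" using closed_sequentially[OF cl] ms(1) lim by blast
  have "(\<lambda>k. (norm (x - ms k))^2) \<longlonglongrightarrow> (norm (x - m))^2"
    by (intro tendsto_intros lim)
  then have "(norm (x - m))^2 \<le> D"
    using LIMSEQ_le[OF _ LIMSEQ_inverse_real_of_nat_add[of D]] ms(2) less_imp_le by blast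
  then have Deq: "(norm (x - m))^2 \<le> (norm (x - m'))^2" if "m' \<in> M" for m'
    using Dle[OF that] by linarith
  show ?thesis
  proof (intro bexI[OF _ mM] ballI)
    fix y assume "y \<in> M"
    define c where "c = inner (x - m) y"
    define n where "n = (norm y)^2"
    have n0: "0 \<le> n" unfolding n_def by simp
    have ineq: "0 \<le> t * (t * n - 2 * c)" for t
    proof -
      have "m + t *\<^sub>R y \<in> M" using mM \<open>y \<in> M\<close> sub by (simp add: subspace_add subspace_scale)
      from Deq[OF this] have "(norm (x - m))^2 \<le> (norm ((x - m) - t *\<^sub>R y))^2"
        by (simp add: algebra_simps)
      then show ?thesis unfolding norm_sq_expand c_def n_def by (simp add: algebra_simps power2_eq_square)
    qed
    define t where "t = c / (1 + n)"
    have "t * (t * n - 2 * c) = - (c^2 * (n + 2)) / (1 + n)^2"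
      unfolding t_def using n0 by (simp add: field_simps power2_eq_square)
    with ineq[of t] have "c^2 * (n + 2) \<le> 0"
      using n0 by (simp add: divide_le_0_iff)
    then have "c^2 \<le> 0" using n0 by (simp add: mult_le_0_iff)
    then show "inner (x - m) y = 0" unfolding c_def by simp
  qed
qed

lemma inner_unique:
  fixes z1 z2 :: "'a::real_inner"
  assumes "\<And>x. inner x z1 = inner x z2"
  shows "z1 = z2"
proof -
  have "inner (z1 - z2) (z1 - z2) = 0" using assms by (simp add: inner_diff_right)
  then show ?thesis by simp
qed

lemma riesz:
  fixes f :: "'a::{real_inner,complete_space} \<Rightarrow> real"
  assumes bl: "bounded_linear f"
  shows "\<exists>z. \<forall>x. f x = inner x z"
proof (cases "\<forall>x. f x = 0")
  case True then show ?thesis by (intro exI[of _ 0]) simp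
next
  case False
  then obtain u where "f u \<noteq> 0" by blast
  have lin: "linear f" using bl bounded_linear.linear by blast
  let ?K = "{x. f x = 0}"
  have clK: "closed ?K"
    using continuous_closed_vimage[of "{0}" f] linear_continuous_at[OF bl] by (simp add: vimage_def)
  have subK: "subspace ?K" using lin by (simp add: subspace_def linear_add linear_scale linear_0)
  obtain m where m: "m \<in> ?K" "\<And>y. y \<in> ?K \<Longrightarrow> inner (u - m) y = 0"
    using proj_exists[OF clK subK, of u] by blast
  define w where "w = u - m"
  have fw: "f w = f u" using m(1) lin unfolding w_def by (simp add: linear_diff)
  have "w \<noteq> 0" using fw \<open>f u \<noteq> 0\<close> lin linear_0 by force
  then have ww: "inner w w \<noteq> 0" by simp
  show ?thesis
  proof (intro exI[of _ "(f w / inner w w) *\<^sub>R w"] allI)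
    fix x
    have "x - (f x / f w) *\<^sub>R w \<in> ?K"
      using fw \<open>f u \<noteq> 0\<close> lin by (simp add: linear_diff linear_scale)
    then have "inner w (x - (f x / f w) *\<^sub>R w) = 0" using m(2) unfolding w_def by blast
    then have "inner w x = (f x / f w) * inner w w" by (simp add: inner_diff_right)
    then show "f x = inner x ((f w / inner w w) *\<^sub>R w)"
      using ww fw \<open>f u \<noteq> 0\<close> by (simp add: inner_commute field_simps)
  qed
qed

lemma adjoint_exists:
  fixes A :: "'a::{real_inner,complete_space} \<Rightarrow>\<^sub>L 'a"
  shows "\<exists>S. is_adjoint A S"
proof -
  have "\<forall>y. \<exists>z. \<forall>x. inner (A x) y = inner x z"
  proof
    fix y
    have "bounded_linear (\<lambda>x. inner (A x) y)"
      by (rule bounded_linear_compose[OF bounded_linear_inner_left blinfun.bounded_linear_right])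
    then show "\<exists>z. \<forall>x. inner (A x) y = inner x z" by (rule riesz)
  qed
  then obtain g where g: "\<And>x y. inner (A x) y = inner x (g y)" by metis
  have add: "g (a + b) = g a + g b" for a b
    by (rule inner_unique) (metis g blinfun.add_right inner_add_right)
  have scale: "g (r *\<^sub>R a) = r *\<^sub>R g a" for r a
    by (rule inner_unique) (metis g blinfun.scaleR_right inner_scaleR_right)
  have bound: "norm (g y) \<le> norm y * norm A" for y
  proof (cases "g y = 0")
    case True then show ?thesis by simp
  next
    case False
    have "(norm (g y))^2 = inner (A (g y)) y" by (simp add: g power2_norm_eq_inner)
    also have "\<dots> \<le> norm (A (g y)) * norm y" by (rule norm_cauchy_schwarz)
    also have "\<dots> \<le> norm A * norm (g y) * norm y"
      by (simp add: mult_right_mono norm_blinfun)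
    finally have "norm (g y) * norm (g y) \<le> (norm A * norm y) * norm (g y)"
      by (simp add: power2_eq_square algebra_simps)
    then show ?thesis using False by (simp add: algebra_simps)
  qed
  have bl: "bounded_linear g" by (rule bounded_linear_intro[OF add scale bound])
  show ?thesis
    by (intro exI[of _ "Blinfun g"]) (simp add: is_adjoint_def bounded_linear_Blinfun_apply[OF bl] g)
qed

lemma adjoint_unique_op:
  fixes A :: "'a::real_inner \<Rightarrow>\<^sub>L 'a"
  assumes "is_adjoint A S1" "is_adjoint A S2"
  shows "S1 = S2"
proof (rule blinfun_eqI)
  fix y show "S1 y = S2 y"
  proof (rule inner_unique)
    fix x
    have "inner x (S1 y) = inner (A x) y" using assms(1) unfolding is_adjoint_def by metis
    also have "\<dots> = inner x (S2 y)" using assms(2) unfolding is_adjoint_def by metis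
    finally show "inner x (S1 y) = inner x (S2 y)" .
  qed
qed

lemma adj_unique:
  fixes A :: "'a::{real_inner,complete_space} \<Rightarrow>\<^sub>L 'a"
  assumes "is_adjoint A S"
  shows "adj A = S"
  unfolding adj_def
proof (rule the_equality)
  show "is_adjoint A S" by (rule assms)
  fix S' assume "is_adjoint A S'"
  then show "S' = S" using adjoint_unique_op assms by blast
qed

lemma adj_is_adjoint:
  fixes A :: "'a::{real_inner,complete_space} \<Rightarrow>\<^sub>L 'a"
  shows "is_adjoint A (adj A)"
proof -
  obtain S where "is_adjoint A S" using adjoint_exists[of A] by blast
  then show ?thesis using adj_unique[of A S] by simp
qed

lemma adj1: "inner (A x) y = inner x (adj A y)"
  for A :: "'a::{real_inner,complete_space} \<Rightarrow>\<^sub>L 'a"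
  using adj_is_adjoint[of A] unfolding is_adjoint_def by blast

lemma adj2: "inner x (A y) = inner (adj A x) y"
  for A :: "'a::{real_inner,complete_space} \<Rightarrow>\<^sub>L 'a"
  using adj1[of A y x] by (simp add: inner_commute)

lemma adj_adj [simp]: "adj (adj A) = A"
  for A :: "'a::{real_inner,complete_space} \<Rightarrow>\<^sub>L 'a"
  by (rule adj_unique) (simp add: is_adjoint_def adj2)

lemma adj_comp: "adj (A o\<^sub>L B) = adj B o\<^sub>L adj A"
  for A B :: "'a::{real_inner,complete_space} \<Rightarrow>\<^sub>L 'a"
  by (rule adj_unique) (simp add: is_adjoint_def adj1)

lemma adj_id [simp]: "adj (id_blinfun :: 'a::{real_inner,complete_space} \<Rightarrow>\<^sub>L 'a) = id_blinfun"
  by (rule adj_unique) (simp add: is_adjoint_def)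

lemma open_mapping_approx:
  fixes A :: "'a::{real_inner,complete_space} \<Rightarrow>\<^sub>L 'a"
  assumes cl: "closed (range (blinfun_apply A))"
  shows "\<exists>K\<ge>0. \<forall>y\<in>range (blinfun_apply A). \<forall>e>0. \<exists>x. norm x \<le> K * norm y \<and> norm (y - A x) < e"
proof -
  let ?R = "range (blinfun_apply A)"
  let ?X = "top_of_set ?R"
  define F where "F k = ?R \<inter> closure (blinfun_apply A ` cball 0 (real k))" for k :: nat
  have cm: "completely_metrizable_space ?X"
    using completely_metrizable_space_closedin[OF completely_metrizable_space_euclidean] cl closed_closedin by blast
  have "\<exists>k. ?X interior_of F k \<noteq> {}"
  proof (rule ccontr)
    assume "\<not> ?thesis"
    then have e: "\<And>k. ?X interior_of F k = {}" by blast
    have "?X interior_of \<Union>(range F) = {}"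
    proof (rule Baire_category_alt[OF disjI1[OF cm]])
      show "countable (range F)" by simp
      fix T assume "T \<in> range F"
      then obtain k where T: "T = F k" by blast
      show "closedin ?X T \<and> ?X interior_of T = {}"
        unfolding T using e[of k] by (simp add: F_def closedin_closed_Int)
    qed
    moreover have "\<Union>(range F) = ?R"
    proof
      show "\<Union>(range F) \<subseteq> ?R" unfolding F_def by blast
      show "?R \<subseteq> \<Union>(range F)"
      proof
        fix y assume "y \<in> ?R"
        then obtain x where x: "y = A x" by blast
        obtain k :: nat where "norm x \<le> real k" using real_arch_simple by blast
        then have "y \<in> F k" unfolding F_def using x closure_subset by fastforce
        then show "y \<in> \<Union>(range F)" by blast
      qed
    qed
    moreover have "?X interior_of ?R = ?R"
      using interior_of_topspace[of ?X] by simp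
    ultimately show False by auto
  qed
  then obtain k y0 where "y0 \<in> ?X interior_of F k" by blast
  then obtain U where U: "openin ?X U" "y0 \<in> U" "U \<subseteq> F k" unfolding interior_of_def by blast
  then obtain V where V: "open V" "U = ?R \<inter> V" using openin_open by blast
  then obtain r where r: "r > 0" "ball y0 r \<subseteq> V" using U(2) open_contains_ball by blast
  have y0R: "y0 \<in> ?R" using U V by blast
  have sub: "?R \<inter> ball y0 r \<subseteq> closure (blinfun_apply A ` cball 0 (real k))" using U V r F_def by blast
  have step1: "\<exists>x. norm x \<le> 2 * real k \<and> norm (y - A x) < e" if yR1: "y \<in> ?R" and ny: "norm y < r" and e0: "e > 0" for y e
  proof -
    obtain a where a: "y0 = A a" using y0R by blast
    obtain b where b: "y = A b" using yR1 by blast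
    have "y0 + y \<in> ?R" using a b by (metis blinfun.add_right rangeI)
    moreover have "y0 + y \<in> ball y0 r" using ny by (simp add: dist_norm)
    ultimately have "y0 + y \<in> closure (blinfun_apply A ` cball 0 (real k))" using sub by blast
    then obtain z1 where "z1 \<in> blinfun_apply A ` cball 0 (real k)" "dist z1 (y0 + y) < e/2"
      using closure_approachable[of "y0+y"] \<open>e>0\<close> half_gt_zero by blast
    then obtain a1 where a1: "a1 \<in> cball 0 (real k)" "dist (A a1) (y0 + y) < e/2" by blast
    have "y0 \<in> closure (blinfun_apply A ` cball 0 (real k))" using sub y0R r by auto
    then obtain z2 where "z2 \<in> blinfun_apply A ` cball 0 (real k)" "dist z2 y0 < e/2"
      using closure_approachable[of "y0"] \<open>e>0\<close> half_gt_zero by blast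
    then obtain a2 where a2: "a2 \<in> cball 0 (real k)" "dist (A a2) y0 < e/2" by blast
    show ?thesis
    proof (intro exI conjI)
      show "norm (a1 - a2) \<le> 2 * real k" using a1 a2 norm_triangle_ineq4[of a1 a2] by auto
      have eq: "y - A (a1 - a2) = (y0 + y - A a1) - (y0 - A a2)" by (simp add: blinfun.diff_right)
      have "norm ((y0 + y - A a1) - (y0 - A a2)) \<le> norm (y0 + y - A a1) + norm (y0 - A a2)"
        by (rule norm_triangle_ineq4)
      also have "\<dots> < e" using a1(2) a2(2) by (simp add: dist_norm norm_minus_commute)
      finally show "norm (y - A (a1 - a2)) < e" unfolding eq .
    qed
  qed
  define K where "K = 4 * real k / r"
  have K0: "K \<ge> 0" using r by (simp add: K_def)
  show ?thesis
  proof (intro exI[of _ K] conjI K0 ballI allI impI)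
    fix y and e :: real assume yR: "y \<in> ?R" and "e > 0"
    show "\<exists>x. norm x \<le> K * norm y \<and> norm (y - A x) < e"
    proof (cases "y = 0")
      case True then show ?thesis using \<open>e>0\<close> by (intro exI[of _ 0]) simp
    next
      case False
      define s where "s = r / (2 * norm y)"
      have s0: "s > 0" using False r by (simp add: s_def)
      have "s *\<^sub>R y \<in> ?R" using yR by (metis blinfun.scaleR_right rangeE rangeI)
      moreover have "norm (s *\<^sub>R y) < r" using s0 False r by (simp add: s_def)
      ultimately obtain x' where x': "norm x' \<le> 2 * real k" "norm (s *\<^sub>R y - A x') < e * s"
        using step1[of "s *\<^sub>R y" "e * s"] s0 \<open>e>0\<close> by auto
      show ?thesis
      proof (intro exI[of _ "(1/s) *\<^sub>R x'"] conjI)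
        have "norm ((1/s) *\<^sub>R x') = norm x' / s" using s0 by simp
        also have "\<dots> \<le> 2 * real k / s" using x'(1) s0 by (simp add: divide_right_mono)
        also have "\<dots> = K * norm y" using False r unfolding K_def s_def by (simp add: field_simps)
        finally show "norm ((1/s) *\<^sub>R x') \<le> K * norm y" .
        have "y - A ((1/s) *\<^sub>R x') = (1/s) *\<^sub>R (s *\<^sub>R y - A x')"
          using s0 by (simp add: blinfun.scaleR_right algebra_simps)
        then have "norm (y - A ((1/s) *\<^sub>R x')) = norm (s *\<^sub>R y - A x') / s" using s0 by simp
        also have "\<dots> < e" using x'(2) s0 by (simp add: field_simps)
        finally show "norm (y - A ((1/s) *\<^sub>R x')) < e" .
      qed
    qed
  qed
qed

lemma open_mapping_range:
  fixes A :: "'a::{real_inner,complete_space} \<Rightarrow>\<^sub>L 'a"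
  assumes cl: "closed (range (blinfun_apply A))"
  shows "\<exists>C\<ge>0. \<forall>y\<in>range (blinfun_apply A). \<exists>x. A x = y \<and> norm x \<le> C * norm y"
proof -
  obtain K where K0: "K \<ge> 0" and K: "\<And>y e. y \<in> range (blinfun_apply A) \<Longrightarrow> e > 0 \<Longrightarrow> \<exists>x. norm x \<le> K * norm y \<and> norm (y - A x) < e"
    using open_mapping_approx[OF cl] by blast
  have "\<forall>y. \<exists>x. y \<in> range (blinfun_apply A) \<longrightarrow> norm x \<le> K * norm y \<and> norm (y - A x) \<le> norm y / 2"
  proof
    fix y
    show "\<exists>x. y \<in> range (blinfun_apply A) \<longrightarrow> norm x \<le> K * norm y \<and> norm (y - A x) \<le> norm y / 2"
    proof (cases "y = 0")
      case True then show ?thesis by (intro exI[of _ 0]) simp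
    next
      case False
      then show ?thesis using K[of y "norm y / 2"] by (auto intro: less_imp_le)
    qed
  qed
  then obtain f where f: "\<And>y. y \<in> range (blinfun_apply A) \<Longrightarrow> norm (f y) \<le> K * norm y \<and> norm (y - A (f y)) \<le> norm y / 2"
    by metis
  show ?thesis
  proof (intro exI[of _ "2 * K"] conjI ballI)
    show "0 \<le> 2 * K" using K0 by simp
    fix y assume yR: "y \<in> range (blinfun_apply A)"
    define g where "g z = z - A (f z)" for z
    define ys where "ys j = (g ^^ j) y" for j
    have ys_Suc: "ys (Suc j) = ys j - A (f (ys j))" for j unfolding ys_def g_def by simp
    have ysR: "ys j \<in> range (blinfun_apply A)" for j
    proof (induction j)
      case 0 then show ?case using yR by (simp add: ys_def)
    next
      case (Suc j)
      then obtain u where "ys j = A u" by blast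
      then show ?case unfolding ys_Suc by (metis blinfun.diff_right rangeI)
    qed
    have ysn: "norm (ys j) \<le> norm y * (1/2)^j" for j
    proof (induction j)
      case 0 then show ?case by (simp add: ys_def)
    next
      case (Suc j)
      have "norm (ys (Suc j)) \<le> norm (ys j) / 2" unfolding ys_Suc using f[OF ysR[of j]] by blast
      also have "\<dots> \<le> norm y * (1/2)^(Suc j)" using Suc by simp
      finally show ?case .
    qed
    define xs where "xs j = f (ys j)" for j
    have xsn: "norm (xs j) \<le> K * norm y * (1/2)^j" for j
    proof -
      have "norm (xs j) \<le> K * norm (ys j)" unfolding xs_def using f[OF ysR[of j]] by blast
      also have "\<dots> \<le> K * (norm y * (1/2)^j)" using ysn[of j] K0 by (rule mult_left_mono)
      finally show ?thesis by simp
    qed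
    have geo: "(\<lambda>j. K * norm y * (1/2)^j) sums (K * norm y * 2)"
      using sums_mult[OF geometric_sums[of "1/2::real"], of "K * norm y"] by simp
    have sn: "summable (\<lambda>j. norm (xs j))"
      by (rule summable_comparison_test[OF _ sums_summable[OF geo]]) (auto intro: xsn)
    have lim0: "ys \<longlonglongrightarrow> 0"
    proof -
      have "(\<lambda>j. norm y * (1/2)^j) \<longlonglongrightarrow> 0"
        by (intro tendsto_mult_right_zero LIMSEQ_power_zero) simp
      then show ?thesis
        by (rule Lim_null_comparison[OF always_eventually, rotated]) (use ysn in auto)
    qed
    define S where "S n = (\<Sum>i<n. xs i)" for n
    define R where "R n = (\<Sum>i<n. norm (xs i))" for n
    have SR: "norm (S n - S m) \<le> R n - R m" if "m \<le> n" for m n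
    proof -
      have "S n - S m = sum xs {m..<n}" unfolding S_def using sum_diff_nat_ivl[OF le0 that, of xs]
        by (simp add: atLeast0LessThan)
      moreover have "R n - R m = sum (\<lambda>i. norm (xs i)) {m..<n}" unfolding R_def
        using sum_diff_nat_ivl[OF le0 that, of "\<lambda>i. norm (xs i)"] by (simp add: atLeast0LessThan)
      ultimately show ?thesis by (simp add: norm_sum)
    qed
    have cR: "Cauchy R" unfolding R_def using sn
      by (simp add: summable_iff_convergent Cauchy_convergent_iff)
    have "Cauchy S"
    proof (rule metric_CauchyI)
      fix e :: real assume "e > 0"
      then obtain M where M: "\<And>m n. m \<ge> M \<Longrightarrow> n \<ge> M \<Longrightarrow> dist (R m) (R n) < e"
        using cR unfolding Cauchy_def by blast
      show "\<exists>M. \<forall>m\<ge>M. \<forall>n\<ge>M. dist (S m) (S n) < e"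
      proof (intro exI allI impI)
        fix m n assume "m \<ge> M" "n \<ge> M"
        have "dist (S m) (S n) \<le> dist (R m) (R n)"
        proof (cases "m \<le> n")
          case True then show ?thesis using SR[OF True]
            by (simp add: dist_norm norm_minus_commute dist_real_def)
        next
          case False then show ?thesis using SR[of n m]
            by (simp add: dist_norm dist_real_def)
        qed
        then show "dist (S m) (S n) < e" using M[OF \<open>m \<ge> M\<close> \<open>n \<ge> M\<close>] by linarith
      qed
    qed
    then obtain x where Sx: "S \<longlonglongrightarrow> x" using Cauchy_convergent_iff convergent_def by blast
    have AS: "A (S n) = y - ys n" for n
    proof (induction n)
      case 0 then show ?case by (simp add: S_def ys_def)
    next
      case (Suc n)
      have "S (Suc n) = S n + xs n" by (simp add: S_def)
      then show ?case using Suc by (simp add: blinfun.add_right xs_def ys_Suc)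
    qed
    have "(\<lambda>n. A (S n)) \<longlonglongrightarrow> A x"
      by (rule bounded_linear.tendsto[OF blinfun.bounded_linear_right Sx])
    moreover have "(\<lambda>n. A (S n)) \<longlonglongrightarrow> y - 0"
      unfolding AS by (intro tendsto_intros lim0)
    ultimately have Ax: "A x = y" using LIMSEQ_unique by fastforce
    have "norm (S n) \<le> 2 * K * norm y" for n
    proof -
      have "norm (S n) \<le> R n" unfolding S_def R_def by (rule norm_sum)
      also have "\<dots> \<le> (\<Sum>i<n. K * norm y * (1/2)^i)" unfolding R_def by (intro sum_mono xsn)
      also have "\<dots> \<le> (\<Sum>i. K * norm y * (1/2)^i)"
        by (rule sum_le_suminf[OF sums_summable[OF geo]]) (use K0 in auto)
      also have "\<dots> = 2 * K * norm y" using sums_unique[OF geo] by simp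
      finally show ?thesis .
    qed
    then have nb: "norm x \<le> 2 * K * norm y"
      using Lim_bounded[OF tendsto_norm[OF Sx], of 0] by blast
    show "\<exists>x. A x = y \<and> norm x \<le> 2 * K * norm y" using nb Ax by blast
  qed
qed

lemma lower_bound:
  fixes A :: "'a::{real_inner,complete_space} \<Rightarrow>\<^sub>L 'a"
  assumes cl: "closed (range (blinfun_apply A))"
  shows "\<exists>C\<ge>0. \<forall>x. (\<forall>n. A n = 0 \<longrightarrow> inner x n = 0) \<longrightarrow> norm x \<le> C * norm (A x)"
proof -
  obtain C where C0: "C \<ge> 0" and C: "\<And>y. y \<in> range (blinfun_apply A) \<Longrightarrow> \<exists>x. A x = y \<and> norm x \<le> C * norm y"
    using open_mapping_range[OF cl] by blast
  show ?thesis
  proof (intro exI[of _ C] conjI C0 allI impI)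
    fix x assume orth: "\<forall>n. A n = 0 \<longrightarrow> inner x n = 0"
    obtain x' where x': "A x' = A x" "norm x' \<le> C * norm (A x)" using C[of "A x"] by blast
    have "A (x - x') = 0" using x' by (simp add: blinfun.diff_right)
    then have "inner x (x - x') = 0" using orth by blast
    then have "inner x x = inner x x'" by (simp add: inner_diff_right)
    then have "(norm x)^2 \<le> norm x * norm x'"
      by (metis norm_cauchy_schwarz power2_norm_eq_inner)
    then have "norm x \<le> norm x'"
      by (cases "x = 0") (auto simp: power2_eq_square)
    then show "norm x \<le> C * norm (A x)" using x' by linarith
  qed
qed

lemma comp_assoc_L: "(A o\<^sub>L B) o\<^sub>L C = A o\<^sub>L (B o\<^sub>L C)"
  by (rule blinfun_eqI) simp

lemma kernel_closed_subspace:
  fixes A :: "'a::{real_inner,complete_space} \<Rightarrow>\<^sub>L 'a"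
  shows "closed {x. A x = 0}" "subspace {x. A x = 0}"
proof -
  have "closed (blinfun_apply A -` {0})"
    by (rule continuous_closed_vimage) (simp_all add: linear_continuous_at blinfun.bounded_linear_right)
  then show "closed {x. A x = 0}" by (simp add: vimage_def)
  show "subspace {x. A x = 0}"
    by (simp add: subspace_def blinfun.add_right blinfun.scaleR_right)
qed

lemma range_subspace:
  fixes A :: "'a::{real_inner,complete_space} \<Rightarrow>\<^sub>L 'a"
  shows "subspace (range (blinfun_apply A))"
  unfolding subspace_def
proof (intro conjI ballI allI)
  show "0 \<in> range (blinfun_apply A)" using blinfun.zero_right[of A] by (metis rangeI)
  fix x y assume "x \<in> range (blinfun_apply A)" "y \<in> range (blinfun_apply A)"
  then obtain a b where "x = A a" "y = A b" by blast
  then have "x + y = A (a + b)" by (simp add: blinfun.add_right)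
  then show "x + y \<in> range (blinfun_apply A)" by simp
next
  fix c x assume "x \<in> range (blinfun_apply A)"
  then obtain a where "x = A a" by blast
  then have "c *\<^sub>R x = A (c *\<^sub>R a)" by (simp add: blinfun.scaleR_right)
  then show "c *\<^sub>R x \<in> range (blinfun_apply A)" by simp
qed

lemma mp_exists:
  fixes A :: "'a::{real_inner,complete_space} \<Rightarrow>\<^sub>L 'a"
  assumes cr: "closed_range A"
  shows "\<exists>B. is_mp_inverse A B"
proof -
  have cl: "closed (range (blinfun_apply A))" using cr unfolding closed_range_def .
  define P where "P y x \<longleftrightarrow> (\<forall>n. A n = 0 \<longrightarrow> inner x n = 0) \<and> (\<forall>z. inner (y - A x) (A z) = 0)" for y x
  have ex: "\<exists>x. P y x" for y
  proof -
    obtain m where m: "m \<in> range (blinfun_apply A)" "\<And>v. v \<in> range (blinfun_apply A) \<Longrightarrow> inner (y - m) v = 0"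
      using proj_exists[OF cl range_subspace, of y] by blast
    then obtain u where u: "m = A u" by blast
    obtain n0 where n0: "A n0 = 0" "\<And>v. A v = 0 \<Longrightarrow> inner (u - n0) v = 0"
      using proj_exists[OF kernel_closed_subspace, of A u] by auto
    have "A (u - n0) = m" using u n0 by (simp add: blinfun.diff_right)
    then show ?thesis unfolding P_def using m(2) n0(2) by (intro exI[of _ "u - n0"]) auto
  qed
  have uniq: "x1 = x2" if "P y x1" "P y x2" for y x1 x2
  proof -
    have "inner (A (x1 - x2)) (A (x1 - x2)) = 0"
    proof -
      have "inner (y - A x2) (A (x1 - x2)) - inner (y - A x1) (A (x1 - x2)) = 0"
        using that unfolding P_def by simp
      then show ?thesis by (simp add: blinfun.diff_right inner_diff_left algebra_simps)
    qed
    then have "A (x1 - x2) = 0" by simp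
    then have "inner x1 (x1 - x2) = 0" "inner x2 (x1 - x2) = 0" using that unfolding P_def by auto
    then have "inner (x1 - x2) (x1 - x2) = 0" by (simp add: inner_diff_left)
    then show ?thesis by simp
  qed
  define g where "g y = (THE x. P y x)" for y
  have Pg: "P y (g y)" for y
  proof -
    have "\<exists>!x. P y x" using ex uniq by blast
    then show ?thesis unfolding g_def by (rule theI')
  qed
  have geq: "g y = x" if "P y x" for y x using Pg uniq that by blast
  have add: "g (a + b) = g a + g b" for a b
  proof (rule geq)
    show "P (a + b) (g a + g b)" using Pg[of a] Pg[of b] unfolding P_def
      by (simp add: inner_add_left blinfun.add_right algebra_simps)
  qed
  have scale: "g (r *\<^sub>R a) = r *\<^sub>R g a" for r a
  proof (rule geq)
    show "P (r *\<^sub>R a) (r *\<^sub>R g a)" using Pg[of a] unfolding P_def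
      by (simp add: blinfun.scaleR_right flip: scaleR_diff_right)
  qed
  obtain C where C0: "C \<ge> 0" and C: "\<And>x. (\<forall>n. A n = 0 \<longrightarrow> inner x n = 0) \<Longrightarrow> norm x \<le> C * norm (A x)"
    using lower_bound[OF cl] by blast
  have bound: "norm (g y) \<le> norm y * C" for y
  proof -
    have o: "inner (A (g y)) (y - A (g y)) = 0" using Pg[of y] unfolding P_def by (simp add: inner_commute)
    have "(norm y)^2 = (norm (A (g y)))^2 + (norm (y - A (g y)))^2"
      using pythag[OF o] by simp
    then have "(norm (A (g y)))^2 \<le> (norm y)^2" by simp
    then have n1: "norm (A (g y)) \<le> norm y" by (rule power2_le_imp_le) simp
    have "norm (g y) \<le> C * norm (A (g y))" using C Pg[of y] unfolding P_def by blast
    also have "\<dots> \<le> C * norm y" using n1 C0 by (rule mult_left_mono)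
    finally show ?thesis by (simp add: mult.commute)
  qed
  have bl: "bounded_linear g" by (rule bounded_linear_intro[OF add scale bound])
  define B where "B = Blinfun g"
  have Bg: "B y = g y" for y unfolding B_def using bounded_linear_Blinfun_apply[OF bl] by simp
  have BA: "B (A x) = x - (x - B (A x))" for x by simp
  have ABA: "A (B (A x)) = A x" for x
  proof -
    have "inner (A x - A (g (A x))) (A (x - g (A x))) = 0" using Pg[of "A x"] unfolding P_def by blast
    then have "A x - A (g (A x)) = 0" by (simp add: blinfun.diff_right)
    then show ?thesis by (simp add: Bg)
  qed
  have ker1: "A (x - B (A x)) = 0" for x using ABA[of x] by (simp add: blinfun.diff_right)
  have orthB: "inner (B y) n = 0" if "A n = 0" for y n using Pg[of y] that unfolding P_def Bg by blast
  have orthR: "inner (y - A (B y)) (A z) = 0" for y z using Pg[of y] unfolding P_def Bg by blast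
  have BAB: "B (A (B y)) = B y" for y
  proof -
    have "P (A (B y)) (B y)" unfolding P_def using orthB by simp
    then show ?thesis using geq Bg by metis
  qed
  have sym1: "inner (B (A x)) y = inner (B (A x)) (B (A y))" for x y
  proof -
    have "inner (B (A x)) (y - B (A y)) = 0" using orthB ker1 by blast
    then show ?thesis by (simp add: inner_diff_right)
  qed
  have sym2: "inner (A (B x)) y = inner (A (B x)) (A (B y))" for x y
  proof -
    have "inner (A (B x)) (y - A (B y)) = 0" using orthR[of y "B x"] by (simp add: inner_commute)
    then show ?thesis by (simp add: inner_diff_right)
  qed
  have "is_mp_inverse A B"
    unfolding is_mp_inverse_def
  proof (intro conjI)
    show "A o\<^sub>L B o\<^sub>L A = A" by (rule blinfun_eqI) (simp add: ABA)
    show "B o\<^sub>L A o\<^sub>L B = B" by (rule blinfun_eqI) (simp add: BAB)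
    show "adj (B o\<^sub>L A) = B o\<^sub>L A"
    proof (rule adj_unique)
      show "is_adjoint (B o\<^sub>L A) (B o\<^sub>L A)" unfolding is_adjoint_def
      proof (intro allI)
        fix x y
        have "inner (B (A x)) y = inner (B (A x)) (B (A y))" by (rule sym1)
        also have "\<dots> = inner (B (A y)) (B (A x))" by (rule inner_commute)
        also have "\<dots> = inner (B (A y)) x" by (rule sym1[symmetric])
        also have "\<dots> = inner x (B (A y))" by (rule inner_commute)
        finally show "inner ((B o\<^sub>L A) x) y = inner x ((B o\<^sub>L A) y)" by simp
      qed
    qed
    show "adj (A o\<^sub>L B) = A o\<^sub>L B"
    proof (rule adj_unique)
      show "is_adjoint (A o\<^sub>L B) (A o\<^sub>L B)" unfolding is_adjoint_def
      proof (intro allI)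
        fix x y
        have "inner (A (B x)) y = inner (A (B x)) (A (B y))" by (rule sym2)
        also have "\<dots> = inner (A (B y)) (A (B x))" by (rule inner_commute)
        also have "\<dots> = inner (A (B y)) x" by (rule sym2[symmetric])
        also have "\<dots> = inner x (A (B y))" by (rule inner_commute)
        finally show "inner ((A o\<^sub>L B) x) y = inner x ((A o\<^sub>L B) y)" by simp
      qed
    qed
  qed
  then show ?thesis by blast
qed

lemma adj_mp_inverse:
  fixes A :: "'a::{real_inner,complete_space} \<Rightarrow>\<^sub>L 'a"
  assumes "is_mp_inverse A B"
  shows "is_mp_inverse (adj A) (adj B)"
proof -
  from assms have b1: "A o\<^sub>L B o\<^sub>L A = A" and b2: "B o\<^sub>L A o\<^sub>L B = B"
    and b3: "adj (B o\<^sub>L A) = B o\<^sub>L A" and b4: "adj (A o\<^sub>L B) = A o\<^sub>L B"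
    unfolding is_mp_inverse_def by auto
  have "adj A o\<^sub>L adj B o\<^sub>L adj A = adj (A o\<^sub>L B o\<^sub>L A)" by (simp add: adj_comp comp_assoc_L)
  moreover have "adj B o\<^sub>L adj A o\<^sub>L adj B = adj (B o\<^sub>L A o\<^sub>L B)" by (simp add: adj_comp comp_assoc_L)
  moreover have "adj (adj A o\<^sub>L adj B) = adj A o\<^sub>L adj B"
    by (metis adj_comp b3)
  moreover have "adj (adj B o\<^sub>L adj A) = adj B o\<^sub>L adj A"
    by (metis adj_comp b4)
  ultimately show ?thesis using b1 b2 unfolding is_mp_inverse_def by simp
qed

lemma mp_unique:
  fixes A :: "'a::{real_inner,complete_space} \<Rightarrow>\<^sub>L 'a"
  assumes b: "is_mp_inverse A B" and c: "is_mp_inverse A C"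
  shows "B = C"
proof -
  from b have b1: "A o\<^sub>L B o\<^sub>L A = A" and b2: "B o\<^sub>L A o\<^sub>L B = B"
    and b3: "adj (B o\<^sub>L A) = B o\<^sub>L A" and b4: "adj (A o\<^sub>L B) = A o\<^sub>L B"
    unfolding is_mp_inverse_def by auto
  from c have c1: "A o\<^sub>L C o\<^sub>L A = A" and c2: "C o\<^sub>L A o\<^sub>L C = C"
    and c3: "adj (C o\<^sub>L A) = C o\<^sub>L A" and c4: "adj (A o\<^sub>L C) = A o\<^sub>L C"
    unfolding is_mp_inverse_def by auto
  have B1: "A (B (A x)) = A x" for x using b1 by (metis blinfun_apply_blinfun_compose)
  have C1: "A (C (A x)) = A x" for x using c1 by (metis blinfun_apply_blinfun_compose)
  have B2: "B (A (B x)) = B x" for x using b2 by (metis blinfun_apply_blinfun_compose)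
  have C2: "C (A (C x)) = C x" for x using c2 by (metis blinfun_apply_blinfun_compose)
  have AB: "A o\<^sub>L B = A o\<^sub>L C"
  proof -
    have "A o\<^sub>L B = adj (A o\<^sub>L B)" using b4 by simp
    also have "\<dots> = adj (A o\<^sub>L C o\<^sub>L A o\<^sub>L B)" using c1 by simp
    also have "\<dots> = adj (A o\<^sub>L B) o\<^sub>L adj (A o\<^sub>L C)"
      by (simp add: adj_comp comp_assoc_L)
    also have "\<dots> = A o\<^sub>L B o\<^sub>L (A o\<^sub>L C)" using b4 c4 by simp
    also have "\<dots> = A o\<^sub>L C" using b1 by (simp add: comp_assoc_L[symmetric])
    finally show ?thesis .
  qed
  have BA: "B o\<^sub>L A = C o\<^sub>L A"
  proof -
    have "B o\<^sub>L A = adj (B o\<^sub>L A)" using b3 by simp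
    also have "\<dots> = adj (B o\<^sub>L A o\<^sub>L C o\<^sub>L A)" using c1 by (simp add: comp_assoc_L)
    also have "\<dots> = adj (C o\<^sub>L A) o\<^sub>L adj (B o\<^sub>L A)"
      by (simp add: adj_comp comp_assoc_L)
    also have "\<dots> = C o\<^sub>L A o\<^sub>L (B o\<^sub>L A)" using b3 c3 by simp
    also have "\<dots> = C o\<^sub>L A" using b1 by (simp add: comp_assoc_L)
    finally show ?thesis .
  qed
  have "B = B o\<^sub>L A o\<^sub>L B" using b2 by simp
  also have "\<dots> = B o\<^sub>L (A o\<^sub>L C)" using AB by (simp add: comp_assoc_L)
  also have "\<dots> = (C o\<^sub>L A) o\<^sub>L C" using BA by (simp add: comp_assoc_L[symmetric])
  also have "\<dots> = C" using c2 by simp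
  finally show ?thesis .
qed

lemma mp_prop:
  fixes A :: "'a::{real_inner,complete_space} \<Rightarrow>\<^sub>L 'a"
  assumes "closed_range A"
  shows "is_mp_inverse A (mp A)"
proof -
  obtain B where "is_mp_inverse A B" using mp_exists[OF assms] by blast
  then have "mp A = B" unfolding mp_def
    by (rule the_equality) (rule mp_unique[OF _ \<open>is_mp_inverse A B\<close>])
  then show ?thesis using \<open>is_mp_inverse A B\<close> by simp
qed

lemma opow_0 [simp]: "opow A 0 = id_blinfun" by (simp add: opow_def)
lemma opow_Suc: "opow A (Suc n) = A o\<^sub>L opow A n" by (simp add: opow_def)
lemma opow_Suc_apply [simp]: "opow A (Suc n) x = A (opow A n x)" by (simp add: opow_Suc)
lemma opow_comm_apply: "opow A n (A x) = A (opow A n x)"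
  by (induction n) simp_all

lemma opow_comm_gen:
  fixes A X :: "'a::real_normed_vector \<Rightarrow>\<^sub>L 'a"
  assumes "\<And>x. A (X x) = X (A x)"
  shows "opow A n (X x) = X (opow A n x)"
  using assms by (induction n) simp_all

lemma adj_opow:
  fixes A :: "'a::{real_inner,complete_space} \<Rightarrow>\<^sub>L 'a"
  shows "adj (opow A n) = opow (adj A) n"
proof (induction n)
  case 0 then show ?case by simp
next
  case (Suc n)
  have "adj (opow A (Suc n)) = adj (opow A n) o\<^sub>L adj A" by (simp add: opow_Suc adj_comp)
  also have "\<dots> = opow (adj A) (Suc n)" using Suc by (intro blinfun_eqI) (simp add: opow_comm_apply)
  finally show ?case .
qed

lemma mp_facts:
  fixes A B :: "'a::{real_inner,complete_space} \<Rightarrow>\<^sub>L 'a"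
  assumes "is_mp_inverse A B"
  shows "A (B (A x)) = A x" "B (A (B x)) = B x"
    "adj A (adj B x) = B (A x)" "adj B (adj A x) = A (B x)"
    "inner (B (A x)) y = inner x (B (A y))" "inner (A (B x)) y = inner x (A (B y))"
    "adj A (adj B (adj A x)) = adj A x" "adj B (adj A (adj B x)) = adj B x"
proof -
  from assms have b1: "A o\<^sub>L B o\<^sub>L A = A" and b2: "B o\<^sub>L A o\<^sub>L B = B"
    and b3: "adj (B o\<^sub>L A) = B o\<^sub>L A" and b4: "adj (A o\<^sub>L B) = A o\<^sub>L B"
    unfolding is_mp_inverse_def by auto
  from assms have "is_mp_inverse (adj A) (adj B)" by (rule adj_mp_inverse)
  then have a1: "adj A o\<^sub>L adj B o\<^sub>L adj A = adj A" and a2: "adj B o\<^sub>L adj A o\<^sub>L adj B = adj B"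
    unfolding is_mp_inverse_def by auto
  show "A (B (A x)) = A x" using arg_cong[OF b1, of "\<lambda>F. F x"] by simp
  show "B (A (B x)) = B x" using arg_cong[OF b2, of "\<lambda>F. F x"] by simp
  show "adj A (adj B x) = B (A x)" using arg_cong[OF b3, of "\<lambda>F. F x"] by (simp add: adj_comp)
  show "adj B (adj A x) = A (B x)" using arg_cong[OF b4, of "\<lambda>F. F x"] by (simp add: adj_comp)
  show "adj A (adj B (adj A x)) = adj A x" using arg_cong[OF a1, of "\<lambda>F. F x"] by simp
  show "adj B (adj A (adj B x)) = adj B x" using arg_cong[OF a2, of "\<lambda>F. F x"] by simp
  have "inner (B (A x)) y = inner x (adj A (adj B y))" by (simp add: adj1)
  also have "\<dots> = inner x (B (A y))" using arg_cong[OF b3, of "\<lambda>F. F y"] by (simp add: adj_comp)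
  finally show "inner (B (A x)) y = inner x (B (A y))" .
  have "inner (A (B x)) y = inner x (adj B (adj A y))" by (simp add: adj1)
  also have "\<dots> = inner x (A (B y))" using arg_cong[OF b4, of "\<lambda>F. F y"] by (simp add: adj_comp)
  finally show "inner (A (B x)) y = inner x (A (B y))" .
qed

lemma inner_unique2:
  fixes z1 z2 :: "'a::real_inner"
  assumes "\<And>x. inner z1 x = inner z2 x"
  shows "z1 = z2"
proof (rule inner_unique)
  fix x show "inner x z1 = inner x z2" using assms[of x] by (simp only: inner_commute)
qed

lemma EP_iff:
  fixes S :: "'a::{real_inner,complete_space} \<Rightarrow>\<^sub>L 'a"
  assumes cr: "closed_range S"
  shows "is_EP S \<longleftrightarrow> S o\<^sub>L mp S = mp S o\<^sub>L S"
proof -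
  define C where "C = mp S"
  have mpC: "is_mp_inverse S C" unfolding C_def by (rule mp_prop[OF cr])
  note f = mp_facts[OF mpC]
  have rE: "range (blinfun_apply S) = range (\<lambda>x. S (C x))"
  proof (intro set_eqI iffI)
    fix y assume "y \<in> range (blinfun_apply S)"
    then obtain x where "y = S x" by blast
    then have "y = S (C (S x))" using f(1) by simp
    then show "y \<in> range (\<lambda>x. S (C x))" by blast
  next
    fix y assume "y \<in> range (\<lambda>x. S (C x))"
    then show "y \<in> range (blinfun_apply S)" by blast
  qed
  have rF: "range (blinfun_apply (adj S)) = range (\<lambda>x. C (S x))"
  proof (intro set_eqI iffI)
    fix y assume "y \<in> range (blinfun_apply (adj S))"
    then obtain x where "y = adj S x" by blast
    moreover have "C (S (adj S x)) = adj S x" using f(7)[of x] unfolding f(3) .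
    ultimately have "y = C (S (adj S x))" by simp
    then show "y \<in> range (\<lambda>x. C (S x))" by blast
  next
    fix y assume "y \<in> range (\<lambda>x. C (S x))"
    then obtain x where "y = C (S x)" by blast
    then have "y = adj S (adj C x)" using f(3) by simp
    then show "y \<in> range (blinfun_apply (adj S))" by blast
  qed
  show ?thesis
  proof
    assume "is_EP S"
    then have eqr: "range (\<lambda>x. S (C x)) = range (\<lambda>x. C (S x))" unfolding is_EP_def rE rF by simp
    have FE: "C (S (S (C x))) = S (C x)" for x
    proof -
      have "S (C x) \<in> range (\<lambda>x. C (S x))" using eqr by blast
      then obtain w where w: "S (C x) = C (S w)" by blast
      show ?thesis unfolding w using f(2)[of "S w"] by simp
    qed
    have EF: "S (C (C (S x))) = C (S x)" for x
    proof -
      have "C (S x) \<in> range (\<lambda>x. S (C x))" using eqr by blast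
      then obtain w where w: "C (S x) = S (C w)" by blast
      show ?thesis unfolding w using f(1)[of "C w"] by simp
    qed
    have "S (C x) = C (S x)" for x
    proof (rule inner_unique2)
      fix y
      have "inner (S (C x)) y = inner (C (S (S (C x)))) y" by (simp add: FE)
      also have "\<dots> = inner (S (C x)) (C (S y))" by (rule f(5))
      also have "\<dots> = inner x (S (C (C (S y))))" by (rule f(6))
      also have "\<dots> = inner x (C (S y))" by (simp add: EF)
      also have "\<dots> = inner (C (S x)) y" by (rule f(5)[symmetric])
      finally show "inner (S (C x)) y = inner (C (S x)) y" .
    qed
    then show "S o\<^sub>L mp S = mp S o\<^sub>L S" unfolding C_def[symmetric] by (intro blinfun_eqI) simp
  next
    assume "S o\<^sub>L mp S = mp S o\<^sub>L S"
    then have eq: "S o\<^sub>L C = C o\<^sub>L S" unfolding C_def .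
    have "S (C x) = C (S x)" for x using arg_cong[OF eq, of "\<lambda>F. F x"] by simp
    then have "range (\<lambda>x. S (C x)) = range (\<lambda>x. C (S x))" by simp
    then show "is_EP S" unfolding is_EP_def using cr rE rF by simp
  qed
qed

lemma GA:
  fixes T B C :: "'a::{real_inner,complete_space} \<Rightarrow>\<^sub>L 'a"
  assumes mpB: "is_mp_inverse T B" and mpC: "is_mp_inverse (opow T (Suc m)) C"
    and ep: "\<And>x. opow T (Suc m) (C x) = C (opow T (Suc m) x)"
  shows "\<And>x. B (opow T (Suc m) x) = opow T m (C (opow T (Suc m) x))"
    and "\<And>x. B (opow T (Suc m) (C x)) = opow T m (C x)"
    and "\<And>x. opow T (Suc m) (C (B (opow T (Suc m) (C x)))) = B (opow T (Suc m) (C x))"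
proof -
  define S where "S = opow T (Suc m)"
  define Tm where "Tm = opow T m"
  have sT: "S x = T (Tm x)" for x by (simp add: S_def Tm_def)
  have comm: "Tm (S x) = S (Tm x)" for x by (simp add: S_def Tm_def opow_comm_apply)
  note b = mp_facts[OF mpB]
  note c = mp_facts[OF mpC[folded S_def]]
  have e: "S (C x) = C (S x)" for x using ep unfolding S_def .
  have adjS: "adj S x = adj T (opow (adj T) m x)" for x by (simp add: S_def adj_opow)
  have QE: "B (T (C (S x))) = C (S x)" for x
  proof -
    have "C (S x) = adj S (adj C x)" by (rule c(3)[symmetric])
    also have "\<dots> = adj T (opow (adj T) m (adj C x))" by (rule adjS)
    finally have cs: "C (S x) = adj T (opow (adj T) m (adj C x))" .
    show ?thesis unfolding cs by (simp only: b(3)[symmetric] b(7))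
  qed
  have CSS: "C (S (S y)) = S y" for y
    by (rule trans[OF e[of "S y", symmetric] c(1)[of y]])
  have ETE: "C (S (Tm (C (S x)))) = Tm (C (S x))" for x
  proof -
    have h: "Tm (C (S x)) = S (Tm (C x))"
      by (rule trans[OF arg_cong[where f = "blinfun_apply Tm", OF e[symmetric]] comm])
    show ?thesis unfolding h by (rule CSS)
  qed
  have i: "B (S x) = Tm (C (S x))" for x
  proof -
    have "B (S x) = B (S (C (S x)))" by (simp only: c(1))
    also have "\<dots> = B (T (Tm (C (S x))))" by (rule arg_cong[where f = "blinfun_apply B"], rule sT)
    also have "\<dots> = B (T (C (S (Tm (C (S x))))))" by (simp only: ETE)
    also have "\<dots> = C (S (Tm (C (S x))))" by (rule QE)
    also have "\<dots> = Tm (C (S x))" by (rule ETE)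
    finally show ?thesis .
  qed
  have ii: "B (S (C x)) = Tm (C x)" for x
    using i[of "C x"] by (simp only: c(2))
  have iii: "S (C (B (S (C x)))) = B (S (C x))" for x
  proof -
    have "S (C (B (S (C x)))) = S (C (Tm (C x)))" by (simp only: ii)
    also have "\<dots> = S (C (Tm (C (S (C x)))))" by (simp only: c(2))
    also have "\<dots> = C (S (Tm (C (S (C x)))))" by (rule e)
    also have "\<dots> = Tm (C (S (C x)))" by (rule ETE)
    also have "\<dots> = Tm (C x)" by (simp only: c(2))
    also have "\<dots> = B (S (C x))" by (rule ii[symmetric])
    finally show ?thesis .
  qed
  show "\<And>x. B (opow T (Suc m) x) = opow T m (C (opow T (Suc m) x))"
    using i unfolding S_def Tm_def .
  show "\<And>x. B (opow T (Suc m) (C x)) = opow T m (C x)"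
    using ii unfolding S_def Tm_def .
  show "\<And>x. opow T (Suc m) (C (B (opow T (Suc m) (C x)))) = B (opow T (Suc m) (C x))"
    using iii unfolding S_def Tm_def .
qed

lemma part1:
  fixes T :: "'a::{real_inner,complete_space} \<Rightarrow>\<^sub>L 'a"
  assumes crT: "closed_range T" and crS: "closed_range (opow T (Suc m))"
    and ep: "is_EP (opow T (Suc m))"
  shows "opow T (Suc m) o\<^sub>L mp T = mp T o\<^sub>L opow T (Suc m)"
proof -
  define S where "S = opow T (Suc m)"
  define B where "B = mp T"
  define C where "C = mp S"
  have mpB: "is_mp_inverse T B" unfolding B_def by (rule mp_prop[OF crT])
  have mpC: "is_mp_inverse S C" unfolding C_def S_def by (rule mp_prop[OF crS])
  have epo: "S o\<^sub>L C = C o\<^sub>L S" using EP_iff[OF crS] ep by (simp add: S_def C_def)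
  have e: "S (C x) = C (S x)" for x using arg_cong[OF epo, of "\<lambda>F. F x"] by simp
  note c = mp_facts[OF mpC]
  note G = GA[OF mpB mpC[unfolded S_def] e[unfolded S_def], folded S_def]
  have h: "opow (adj T) (Suc m) = adj S" by (simp add: S_def adj_opow)
  have mpB': "is_mp_inverse (adj T) (adj B)" by (rule adj_mp_inverse[OF mpB])
  have mpC': "is_mp_inverse (opow (adj T) (Suc m)) (adj C)"
    unfolding h by (rule adj_mp_inverse[OF mpC])
  have e': "opow (adj T) (Suc m) (adj C x) = adj C (opow (adj T) (Suc m) x)" for x
    unfolding h c(3) c(4) by (rule e[symmetric])
  note G' = GA[OF mpB' mpC' e']
  have G3': "C (S (adj B (C (S x)))) = adj B (C (S x))" for x
    using G'(3)[of x] unfolding h c(3) .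
  have G3: "C (S (B (C (S x)))) = B (C (S x))" for x
    using G(3)[of x] unfolding e .
  have EB: "C (S (B x)) = B (C (S x))" for x
  proof (rule inner_unique2)
    fix y
    have "inner (C (S (B x))) y = inner (B x) (C (S y))" by (rule c(5))
    also have "\<dots> = inner x (adj B (C (S y)))" by (rule adj1)
    also have "\<dots> = inner x (C (S (adj B (C (S y)))))" by (simp only: G3')
    also have "\<dots> = inner (C (S x)) (adj B (C (S y)))" by (rule c(5)[symmetric])
    also have "\<dots> = inner (B (C (S x))) (C (S y))" by (rule adj1[symmetric])
    also have "\<dots> = inner (C (S (B (C (S x))))) y" by (rule c(5)[symmetric])
    also have "\<dots> = inner (B (C (S x))) y" by (simp only: G3)
    finally show "inner (C (S (B x))) y = inner (B (C (S x))) y" .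
  qed
  have "S (B x) = B (S x)" for x
  proof -
    have "S (B x) = S (C (S (B x)))" by (rule c(1)[symmetric])
    also have "\<dots> = S (B (C (S x)))" by (simp only: EB)
    also have "\<dots> = S (B (S (C x)))" by (simp only: e)
    also have "\<dots> = S (opow T m (C x))" by (simp only: G(2))
    also have "\<dots> = opow T m (S (C x))" by (simp add: S_def opow_comm_apply)
    also have "\<dots> = opow T m (C (S x))" by (simp only: e)
    also have "\<dots> = B (S x)" by (rule G(1)[symmetric])
    finally show ?thesis .
  qed
  then show ?thesis unfolding S_def[symmetric] B_def[symmetric] by (intro blinfun_eqI) simp
qed

lemma normal_EP:
  fixes S :: "'a::{real_inner,complete_space} \<Rightarrow>\<^sub>L 'a"
  assumes cr: "closed_range S" and nor: "\<And>x. S (adj S x) = adj S (S x)"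
  shows "S o\<^sub>L mp S = mp S o\<^sub>L S"
proof -
  define C where "C = mp S"
  have mpC: "is_mp_inverse S C" unfolding C_def by (rule mp_prop[OF cr])
  note c = mp_facts[OF mpC]
  have ker: "S x = 0 \<longleftrightarrow> adj S x = 0" for x
  proof -
    have "inner (S x) (S x) = inner x (adj S (S x))" by (rule adj1)
    also have "\<dots> = inner x (S (adj S x))" by (simp only: nor)
    also have "\<dots> = inner (adj S x) (adj S x)" by (rule adj2)
    finally have "inner (S x) (S x) = inner (adj S x) (adj S x)" .
    then show ?thesis by (metis inner_eq_zero_iff)
  qed
  have F0: "S x = 0" if "C (S x) = 0" for x
  proof -
    have "S x = S (C (S x))" by (rule c(1)[symmetric])
    also have "\<dots> = 0" using that by simp
    finally show ?thesis .
  qed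
  have E0: "adj S x = 0" if "S (C x) = 0" for x
  proof -
    have "adj S x = adj S (adj C (adj S x))" by (rule c(7)[symmetric])
    also have "\<dots> = adj S (S (C x))" by (simp only: c(4))
    also have "\<dots> = 0" using that by simp
    finally show ?thesis .
  qed
  have E0': "S (C x) = 0" if "adj S x = 0" for x
  proof -
    have "S (C x) = adj C (adj S x)" by (rule c(4)[symmetric])
    also have "\<dots> = 0" using that by simp
    finally show ?thesis .
  qed
  have EF: "S (C x) = S (C (C (S x)))" for x
  proof -
    define w where "w = x - C (S x)"
    have "C (S w) = C (S x) - C (S (C (S x)))" unfolding w_def by (simp add: blinfun.diff_right)
    also have "\<dots> = 0" by (simp only: c(2)) simp
    finally have "S w = 0" using F0 by blast
    then have "S (C w) = 0" using ker E0' by blast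
    then show ?thesis unfolding w_def by (simp add: blinfun.diff_right)
  qed
  have FE: "C (S x) = C (S (S (C x)))" for x
  proof -
    define w where "w = x - S (C x)"
    have "S (C w) = S (C x) - S (C (S (C x)))" unfolding w_def by (simp add: blinfun.diff_right)
    also have "\<dots> = 0" by (simp only: c(1)) simp
    finally have "adj S w = 0" using E0 by blast
    then have "S w = 0" using ker by blast
    then show ?thesis unfolding w_def by (simp add: blinfun.diff_right)
  qed
  have "S (C x) = C (S x)" for x
  proof (rule inner_unique2)
    fix y
    have "inner (S (C x)) y = inner (S (C (C (S x)))) y" by (simp only: EF[symmetric])
    also have "\<dots> = inner (C (S x)) (S (C y))" by (rule c(6))
    also have "\<dots> = inner x (C (S (S (C y))))" by (rule c(5))
    also have "\<dots> = inner x (C (S y))" by (simp only: FE[symmetric])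
    also have "\<dots> = inner (C (S x)) y" by (rule c(5)[symmetric])
    finally show "inner (S (C x)) y = inner (C (S x)) y" .
  qed
  then show ?thesis unfolding C_def[symmetric] by (intro blinfun_eqI) simp
qed

lemma part2:
  fixes T :: "'a::{real_inner,complete_space} \<Rightarrow>\<^sub>L 'a"
  assumes crT: "closed_range T" and crS: "closed_range (opow T (Suc m))"
    and sd: "adj T o\<^sub>L mp T = mp T o\<^sub>L adj T"
    and nep: "opow T (Suc m) o\<^sub>L mp T = mp T o\<^sub>L opow T (Suc m)"
  shows "opow T (Suc m) o\<^sub>L mp (opow T (Suc m)) = mp (opow T (Suc m)) o\<^sub>L opow T (Suc m)"
proof -
  define S where "S = opow T (Suc m)"
  define Tm where "Tm = opow T m"
  define B where "B = mp T"
  have mpB: "is_mp_inverse T B" unfolding B_def by (rule mp_prop[OF crT])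
  note b = mp_facts[OF mpB]
  have sd': "adj T (B x) = B (adj T x)" for x
    using arg_cong[OF sd, of "\<lambda>F. F x"] unfolding B_def by simp
  have nep': "S (B x) = B (S x)" for x
    using arg_cong[OF nep, of "\<lambda>F. F x"] unfolding B_def S_def by simp
  have sT: "S x = T (Tm x)" for x by (simp add: S_def Tm_def)
  have sT2: "S x = Tm (T x)" for x by (simp add: S_def Tm_def opow_comm_apply)
  have adjTP: "adj T (T (B x)) = adj T x" for x
    by (simp only: b(4)[symmetric] b(7))
  have BY: "adj T (adj B (B x)) = B x" for x
    by (simp only: b(3) b(2))
  have YD: "adj B (B (T (adj T x))) = T (B x)" for x
  proof -
    have "adj B (B (T (adj T x))) = adj B (adj T (adj B (adj T x)))" by (simp only: b(3))
    also have "\<dots> = adj B (adj T x)" by (rule b(8))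
    also have "\<dots> = T (B x)" by (rule b(4))
    finally show ?thesis .
  qed
  have SD1: "T (adj T (adj T x)) = T (B (adj T (T (adj T x))))" for x
  proof -
    have "T (adj T (adj T x)) = T (adj T (adj T (T (B x))))" by (simp only: adjTP)
    also have "\<dots> = T (adj T (adj T (adj B (B (T (adj T x))))))" by (simp only: YD)
    also have "\<dots> = T (adj T (B (T (adj T x))))" by (simp only: BY)
    also have "\<dots> = T (B (adj T (T (adj T x))))" by (simp only: sd')
    finally show ?thesis .
  qed
  have SD2: "T (T (adj T x)) = T (adj T (T (T (B x))))" for x
  proof (rule inner_unique)
    fix z
    have l: "inner z (T (T (adj T x))) = inner (T (adj T (adj T z))) x"
      by (simp only: adj2 adj_adj)
    have r: "inner z (T (adj T (T (T (B x))))) = inner (adj B (adj T (adj T (T (adj T z))))) x"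
      by (simp only: adj2 adj_adj)
    show "inner z (T (T (adj T x))) = inner z (T (adj T (T (T (B x)))))"
      unfolding l r by (simp only: SD1 b(4))
  qed
  have PTP: "T (B (opow T k (T (B x)))) = opow T k (T (B x))" for k x
  proof (cases k)
    case 0 then show ?thesis by (simp add: b(1))
  next
    case (Suc j) then show ?thesis by (simp add: b(1))
  qed
  have K: "opow T k (T (adj T x)) = T (adj T (opow T k (T (B x))))" for k x
  proof (induction k)
    case 0 then show ?case by (simp add: adjTP)
  next
    case (Suc k)
    have "opow T (Suc k) (T (adj T x)) = T (opow T k (T (adj T x)))" by simp
    also have "\<dots> = T (T (adj T (opow T k (T (B x)))))" by (simp only: Suc)
    also have "\<dots> = T (adj T (T (T (B (opow T k (T (B x)))))))" by (rule SD2)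
    also have "\<dots> = T (adj T (T (opow T k (T (B x)))))" by (simp only: PTP)
    also have "\<dots> = T (adj T (opow T (Suc k) (T (B x))))" by simp
    finally show ?case .
  qed
  have PS: "T (B (S z)) = S z" for z by (simp only: sT b(1))
  have N1: "S (T (B x)) = S x" for x
  proof -
    have "S (T (B x)) = T (S (B x))" by (simp add: S_def opow_comm_apply)
    also have "\<dots> = T (B (S x))" by (simp only: nep')
    also have "\<dots> = S x" by (rule PS)
    finally show ?thesis .
  qed
  have N2: "B (S x) = Tm (T (B x))" for x
    by (rule trans[OF nep'[symmetric] sT2])
  have SDc: "S (T (adj T x)) = T (adj T (S x))" for x
    using K[of "Suc m" x] unfolding S_def[symmetric] N1 .
  have YS: "adj B (B (S x)) = S (adj B (B x))" for x
  proof -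
    have "adj B (B (S x)) = adj B (B (S (T (B x))))" by (simp only: N1)
    also have "\<dots> = adj B (B (S (T (adj T (adj B (B x))))))" by (simp only: BY)
    also have "\<dots> = adj B (B (T (adj T (S (adj B (B x))))))" by (simp only: SDc)
    also have "\<dots> = T (B (S (adj B (B x))))" by (rule YD)
    also have "\<dots> = S (adj B (B x))" by (rule PS)
    finally show ?thesis .
  qed
  have M1: "S (adj T x) = T (B (adj T (S x)))" for x
  proof -
    have "S (adj T x) = Tm (T (adj T x))" by (rule sT2)
    also have "\<dots> = T (adj T (Tm (T (B x))))" unfolding Tm_def by (rule K)
    also have "\<dots> = T (adj T (B (S x)))" by (simp only: N2)
    also have "\<dots> = T (B (adj T (S x)))" by (simp only: sd')
    finally show ?thesis .
  qed
  have PB: "T (B (B (S x))) = B (S x)" for x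
    unfolding N2 Tm_def by (rule PTP)
  have M2: "T (B (adj T (S x))) = adj T (S x)" for x
  proof -
    have "T (B (adj T (adj B (B (S z))))) = adj T (adj B (B (S z)))" for z
      by (simp only: BY PB)
    then have "T (B (adj T (S (adj B (B z))))) = adj T (S (adj B (B z)))" for z
      by (simp only: YS)
    from this[of "T (adj T x)"] show ?thesis by (simp only: YD N1)
  qed
  have comm: "adj T (S x) = S (adj T x)" for x using M1 M2 by simp
  have nor: "S (adj S x) = adj S (S x)" for x
  proof -
    have "adj S = opow (adj T) (Suc m)" by (simp add: S_def adj_opow)
    moreover have "opow (adj T) (Suc m) (S x) = S (opow (adj T) (Suc m) x)"
      by (rule opow_comm_gen) (rule comm)
    ultimately show ?thesis by simp
  qed
  show ?thesis using normal_EP[OF crS nor[unfolded S_def]] unfolding S_def .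
qed

theorem mainTheorem8:
  fixes T :: "'a::{real_inner, complete_space} \<Rightarrow>\<^sub>L 'a" and n :: nat
  assumes "closed_range T" and "n \<ge> 1" and "closed_range (opow T n)"
  shows "(is_EP (opow T n) \<longrightarrow> is_nEP n T) \<and>
         (is_SD T \<longrightarrow> (is_nEP n T \<longleftrightarrow> is_EP (opow T n)))"
proof -
  obtain m where n: "n = Suc m" using assms(2) by (cases n) auto
  have crS: "closed_range (opow T (Suc m))" using assms(3) unfolding n .
  have p1: "is_EP (opow T n) \<longrightarrow> is_nEP n T"
    using part1[OF assms(1) crS] assms(1) unfolding is_nEP_def n by blast
  have p2: "is_nEP n T \<longrightarrow> is_EP (opow T n)" if sd: "is_SD T"
  proof
    assume "is_nEP n T"
    then have "opow T (Suc m) o\<^sub>L mp T = mp T o\<^sub>L opow T (Suc m)" unfolding is_nEP_def n by blast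
    moreover have "adj T o\<^sub>L mp T = mp T o\<^sub>L adj T" using sd unfolding is_SD_def by blast
    ultimately have "opow T (Suc m) o\<^sub>L mp (opow T (Suc m)) = mp (opow T (Suc m)) o\<^sub>L opow T (Suc m)"
      using part2[OF assms(1) crS] by blast
    then show "is_EP (opow T n)" using EP_iff[OF crS] unfolding n by blast
  qed
  show ?thesis using p1 p2 by blast
qed

end
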